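(* There exists an absolute constant $C>0$ such that the following holds. Let $\mathcal D$ be a distribution on $[0,1]\times\{0,1\}$, $m$ a positive integer, and $i\in\{0,\ldots,m\}$. For every $\alpha>0$, $$\sum_{j<i}\mathbb I\big[q_j>i/m-\alpha/\sqrt{\pi_j}\big]\sqrt{\pi_j}\le 3+C\log m\,\big(\alpha m+\sqrt{m\cdot\mathsf{SCDL}_m(\mathcal D)}\big),$$ where the sum is over $j\in\{0,\ldots,i-1\}$.
   Context: For $x\in\mathbb R$ write $x_+=\max\{x,0\}$. For $j\in\{0,\ldots,m\}$ let $w_j(p)=(1-|mp-j|)_+$, $\pi_j=\mathbb E_{(p,y)\sim\mathcal D}[w_j(p)]$ and $q_j=\mathbb E_{(p,y)\sim\mathcal D}[w_j(p)y]/\pi_j$; terms with $\pi_j=0$ contribute $0$. Define $$\mathsf{SCDL}_m(\mathcal D)=\max_{k=0,\ldots,m}\Big(\sum_{j=0}^{k}\pi_j\big(q_j-\tfrac{k+1}{m}\big)_+ +\sum_{j=k+1}^{m}\pi_j\big(\tfrac km-q_j\big)_+\Big).$$ *)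

theory Defs
  imports "HOL-Probability.Probability"
begin

definition is_pred_dist :: "(real \<times> real) measure \<Rightarrow> bool" where
  "is_pred_dist D \<longleftrightarrow> prob_space D \<and> sets D = sets (borel :: (real \<times> real) measure)
     \<and> (AE z in D. fst z \<in> {0..1} \<and> snd z \<in> {0, 1})"

definition wgt :: "nat \<Rightarrow> nat \<Rightarrow> real \<Rightarrow> real" where
  "wgt m j p = max (1 - \<bar>real m * p - real j\<bar>) 0"

definition piw :: "(real \<times> real) measure \<Rightarrow> nat \<Rightarrow> nat \<Rightarrow> real" where
  "piw D m j = (\<integral>z. wgt m j (fst z) \<partial>D)"

text \<open>If piw D m j = 0 then qw D m j = 0 (division by zero is 0); such terms
  contribute 0 wherever they appear.\<close>
definition qw :: "(real \<times> real) measure \<Rightarrow> nat \<Rightarrow> nat \<Rightarrow> real" where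
  "qw D m j = (\<integral>z. wgt m j (fst z) * snd z \<partial>D) / piw D m j"

definition SCDL :: "nat \<Rightarrow> (real \<times> real) measure \<Rightarrow> real" where
  "SCDL m D = Max ((\<lambda>k.
      (\<Sum>j\<in>{0..k}. piw D m j * max (qw D m j - (real k + 1) / real m) 0)
    + (\<Sum>j\<in>{k+1..m}. piw D m j * max (real k / real m - qw D m j) 0)) ` {0..m})"

end

theory Submission imports Defs "HOL-Analysis.Harmonic_Numbers"
begin

lemma sum_sqrt_le:
  fixes a :: "nat \<Rightarrow> real"
  assumes "finite A" "\<And>j. j \<in> A \<Longrightarrow> a j \<ge> 0"
  shows "(\<Sum>j\<in>A. sqrt (a j)) \<le> sqrt (real (card A) * (\<Sum>j\<in>A. a j))"
proof -
  have "(\<Sum>j\<in>A. sqrt (a j))\<^sup>2 \<le> (\<Sum>j\<in>A. (sqrt (a j))\<^sup>2) * card A"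
    by (rule sum_squared_le_sum_of_squares)
  also have "(\<Sum>j\<in>A. (sqrt (a j))\<^sup>2) = (\<Sum>j\<in>A. a j)"
    using assms by (intro sum.cong) auto
  finally have "(\<Sum>j\<in>A. sqrt (a j))\<^sup>2 \<le> real (card A) * (\<Sum>j\<in>A. a j)" by (simp add: mult.commute)
  then show ?thesis
    by (metis real_le_rsqrt)
qed

definition ffg :: "(nat \<Rightarrow> real) \<Rightarrow> (nat \<Rightarrow> real) \<Rightarrow> nat \<Rightarrow> nat \<Rightarrow> real \<Rightarrow> nat \<Rightarrow> real" where
  "ffg \<pi> q m i \<alpha> j = (if q j > real i / real m - \<alpha> / sqrt (\<pi> j) then sqrt (\<pi> j) else 0)"

context
  fixes \<pi> q :: "nat \<Rightarrow> real" and m i :: nat and \<alpha> S :: real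
  assumes pi_nn: "\<And>j. 0 \<le> \<pi> j" and pi_le: "\<And>j. \<pi> j \<le> 1"
    and m_pos: "m > 0" and i_le: "i \<le> m" and \<alpha>_pos: "\<alpha> > 0"
    and hS: "\<And>k. k \<le> m \<Longrightarrow> (\<Sum>j\<in>{0..k}. \<pi> j * max (q j - (real k + 1) / real m) 0) \<le> S"
begin

abbreviation "ff \<equiv> ffg \<pi> q m i \<alpha>"

lemma ff_nn: "0 \<le> ff j" unfolding ffg_def using pi_nn by auto
lemma ff_le1: "ff j \<le> 1" unfolding ffg_def using pi_le pi_nn by auto

lemma S_nn: "0 \<le> S"
proof -
  have "0 \<le> (\<Sum>j\<in>{0..0}. \<pi> j * max (q j - (real 0 + 1) / real m) 0)"
    by (intro sum_nonneg mult_nonneg_nonneg pi_nn) auto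
  then show ?thesis using hS[of 0] by linarith
qed

lemma block:
  assumes h1: "h \<ge> 1"
  shows "sum ff {j. j < i \<and> 2*h \<le> i - j \<and> i - j < 4*h} \<le> 4 * \<alpha> * m + 2 * sqrt (m * S)"
proof (cases "2*h \<le> i")
  case False
  then have "{j. j < i \<and> 2*h \<le> i - j \<and> i - j < 4*h} = {}" by auto
  then show ?thesis using \<alpha>_pos S_nn by (simp only: sum.empty) auto
next
  case True
  define J where "J = {j. j < i \<and> 2*h \<le> i - j \<and> i - j < 4*h}"
  define k where "k = i - h - 1"
  have k1: "real k + 1 = real i - real h" using True h1 unfolding k_def by auto
  have km: "k \<le> m" using i_le unfolding k_def by auto
  have Jk: "J \<subseteq> {0..k}" unfolding J_def k_def using h1 by auto
  have finJ: "finite J" unfolding J_def by auto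
  have cardJ: "card J \<le> 2*h"
  proof -
    have "J \<subseteq> (\<lambda>d. i - d) ` {2*h..<4*h}" unfolding J_def
      by (auto intro!: image_eqI[where x="i - _"])
    then have "card J \<le> card {2*h..<4*h}" using card_image_le card_mono by (meson finite_atLeastLessThan finite_imageI le_trans)
    then show ?thesis by simp
  qed
  define c where "c j = q j - (real k + 1) / real m" for j
  define J1 where "J1 = {j\<in>J. c j \<le> real h / (2 * real m)}"
  define J2 where "J2 = {j\<in>J. \<not> c j \<le> real h / (2 * real m)}"
  have hm: "real h > 0" using h1 by auto
  have mpos: "real m > 0" using m_pos by auto
  have f1: "ff j \<le> 2 * \<alpha> * m / h" if "j \<in> J1" for j
  proof (cases "q j > real i / real m - \<alpha> / sqrt (\<pi> j) \<and> \<pi> j > 0")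
    case False
    then show ?thesis unfolding ffg_def using pi_nn[of j] \<alpha>_pos hm mpos
      by (auto simp: less_eq_real_def)
  next
    case True
    have "c j \<le> real h / (2 * real m)" using that unfolding J1_def by auto
    then have "q j \<le> (real i - real h) / m + real h / (2 * real m)" unfolding c_def k1 by simp
    also have "\<dots> = real i / m - real h / (2 * real m)" using mpos by (simp add: field_simps)
    finally have "real h / (2 * real m) < \<alpha> / sqrt (\<pi> j)" using True by linarith
    then have "sqrt (\<pi> j) < 2 * \<alpha> * m / h" using True hm mpos
      by (simp add: field_simps)
    then show ?thesis unfolding ffg_def using True by auto
  qed
  have "sum ff J1 \<le> real (card J1) * (2 * \<alpha> * m / h)"
    using sum_bounded_above[of J1 ff "2 * \<alpha> * m / h"] f1 by auto
  also have "\<dots> \<le> real (2*h) * (2 * \<alpha> * m / h)"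
  proof (rule mult_right_mono)
    have "card J1 \<le> card J" unfolding J1_def using finJ by (intro card_mono) auto
    then show "real (card J1) \<le> real (2*h)" using cardJ by linarith
  qed (use \<alpha>_pos hm mpos in auto)
  also have "\<dots> = 4 * \<alpha> * m" using hm by (simp add: field_simps)
  finally have s1: "sum ff J1 \<le> 4 * \<alpha> * m" .
  have p2: "\<pi> j \<le> (2 * real m / h) * (\<pi> j * max (c j) 0)" if "j \<in> J2" for j
  proof -
    have "c j > real h / (2 * real m)" using that unfolding J2_def by auto
    then have "real h / (2 * real m) \<le> max (c j) 0" by linarith
    then have "1 \<le> (2 * real m / h) * max (c j) 0" using hm mpos by (simp add: field_simps)
    from mult_left_mono[OF this pi_nn[of j]] show ?thesis by (simp add: algebra_simps)
  qed
  have "sum \<pi> J2 \<le> (\<Sum>j\<in>J2. (2 * real m / h) * (\<pi> j * max (c j) 0))"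
    using p2 by (rule sum_mono)
  also have "\<dots> = (2 * real m / h) * (\<Sum>j\<in>J2. \<pi> j * max (c j) 0)" by (simp add: sum_distrib_left)
  also have "\<dots> \<le> (2 * real m / h) * S"
  proof (rule mult_left_mono)
    have "(\<Sum>j\<in>J2. \<pi> j * max (c j) 0) \<le> (\<Sum>j\<in>{0..k}. \<pi> j * max (c j) 0)"
      using Jk unfolding J2_def by (intro sum_mono2) (auto intro: mult_nonneg_nonneg pi_nn)
    also have "\<dots> \<le> S" using hS[OF km] unfolding c_def .
    finally show "(\<Sum>j\<in>J2. \<pi> j * max (c j) 0) \<le> S" .
  qed (use hm mpos in auto)
  finally have sp2: "sum \<pi> J2 \<le> (2 * real m / h) * S" .
  have "sum ff J2 \<le> sum (\<lambda>j. sqrt (\<pi> j)) J2" by (intro sum_mono) (auto simp: ffg_def pi_nn)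
  also have "\<dots> \<le> sqrt (real (card J2) * sum \<pi> J2)"
    using finJ pi_nn unfolding J2_def by (intro sum_sqrt_le) auto
  also have "\<dots> \<le> sqrt (real (2*h) * ((2 * real m / h) * S))"
  proof (intro real_sqrt_le_mono mult_mono sp2)
    have "card J2 \<le> card J" unfolding J2_def using finJ by (intro card_mono) auto
    then show "real (card J2) \<le> real (2*h)" using cardJ by linarith
  qed (auto intro: sum_nonneg pi_nn)
  also have "\<dots> = 2 * sqrt (m * S)"
  proof -
    have "real (2*h) * ((2 * real m / h) * S) = 4 * (m * S)" using hm by (simp add: field_simps)
    then show ?thesis by (simp add: real_sqrt_mult)
  qed
  finally have s2: "sum ff J2 \<le> 2 * sqrt (m * S)" .
  have "J = J1 \<union> J2" "J1 \<inter> J2 = {}" unfolding J1_def J2_def by auto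
  then have "sum ff J = sum ff J1 + sum ff J2" using finJ by (simp add: sum.union_disjoint)
  then show ?thesis using s1 s2 unfolding J_def by linarith
qed

lemma induct_bound:
  "sum ff {j. j < i \<and> i - j < 2^(Suc n)} \<le> 1 + n * (4 * \<alpha> * m + 2 * sqrt (m * S))"
proof (induction n)
  case 0
  have "{j. j < i \<and> i - j < 2^(Suc 0)} \<subseteq> {i - 1}" by auto
  then have "sum ff {j. j < i \<and> i - j < 2^(Suc 0)} \<le> sum ff {i - 1}"
    by (intro sum_mono2) (auto simp: ff_nn)
  then show ?case using ff_le1[of "i-1"] by simp
next
  case (Suc n)
  have eq: "{j. j < i \<and> i - j < 2^(Suc (Suc n))} = {j. j < i \<and> i - j < 2^(Suc n)} \<union>
     {j. j < i \<and> 2*2^n \<le> i - j \<and> i - j < 4*2^n}" by auto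
  have "sum ff {j. j < i \<and> i - j < 2^(Suc (Suc n))} = sum ff {j. j < i \<and> i - j < 2^(Suc n)} +
     sum ff {j. j < i \<and> 2*2^n \<le> i - j \<and> i - j < 4*2^n}"
    unfolding eq by (rule sum.union_disjoint) auto
  also have "\<dots> \<le> 1 + n * (4 * \<alpha> * m + 2 * sqrt (m * S)) + (4 * \<alpha> * m + 2 * sqrt (m * S))"
    using Suc.IH block[of "2^n"] by (intro add_mono) auto
  finally show ?case by (simp add: algebra_simps)
qed

lemma main_bound:
  "sum ff {..<i} \<le> 3 + 6 * ln (real m) * (\<alpha> * m + sqrt (m * S))"
proof -
  obtain n where n: "2^n \<le> m" "m < 2^(n+1)" using ex_power_ivl1[of 2 m] m_pos by auto
  have "{..<i} = {j. j < i \<and> i - j < 2^(Suc n)}" using n i_le by auto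
  then have A: "sum ff {..<i} \<le> 1 + n * (4 * \<alpha> * m + 2 * sqrt (m * S))" using induct_bound by simp
  have X: "0 \<le> \<alpha> * m + sqrt (m * S)" using \<alpha>_pos S_nn by auto
  have "real n \<le> log 2 m"
    using n(1) by (metis le_log2_of_power)
  then have "real n * ln 2 \<le> ln m" by (simp add: log_def field_simps)
  moreover have "real n * (2/3) \<le> real n * ln 2"
    using ln2_ge_two_thirds by (intro mult_left_mono) auto
  ultimately have nl: "real n * (2/3) \<le> ln m" by linarith
  have "n * (4 * \<alpha> * m + 2 * sqrt (m * S)) \<le> n * 4 * (\<alpha> * m + sqrt (m * S))"
    using X \<alpha>_pos S_nn by (simp add: algebra_simps)
  also have "\<dots> = (real n * (2/3)) * 6 * (\<alpha> * m + sqrt (m * S))" by simp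
  also have "\<dots> \<le> ln m * 6 * (\<alpha> * m + sqrt (m * S))"
    using nl X by (intro mult_right_mono) auto
  finally have "n * (4 * \<alpha> * m + 2 * sqrt (m * S)) \<le> ln m * 6 * (\<alpha> * m + sqrt (m * S))" .
  moreover have "ln m * 6 * (\<alpha> * m + sqrt (m * S)) = 6 * ln m * (\<alpha> * m + sqrt (m * S))" by simp
  ultimately show ?thesis using A by linarith
qed

end
lemma wgt_meas:
  assumes "sets D = sets (borel :: (real \<times> real) measure)"
  shows "(\<lambda>z. wgt m j (fst z)) \<in> borel_measurable D"
proof -
  have "(\<lambda>z::real\<times>real. wgt m j (fst z)) \<in> borel_measurable borel"
    unfolding wgt_def by (intro borel_measurable_continuous_onI continuous_intros)
  then show ?thesis by (subst measurable_cong_sets[OF assms refl])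
qed

lemma piw_bounds:
  assumes "is_pred_dist D"
  shows "0 \<le> piw D m j" "piw D m j \<le> 1"
proof -
  have P: "prob_space D" and sD: "sets D = sets (borel :: (real \<times> real) measure)"
    using assms unfolding is_pred_dist_def by auto
  interpret prob_space D by (rule P)
  have w0: "0 \<le> wgt m j p" and w1: "wgt m j p \<le> 1" for p unfolding wgt_def by auto
  show "0 \<le> piw D m j" unfolding piw_def using w0 by simp
  have int: "integrable D (\<lambda>z. wgt m j (fst z))"
    by (rule integrable_const_bound[where B=1]) (use w0 w1 wgt_meas[OF sD] in auto)
  have "piw D m j \<le> (\<integral>z. 1 \<partial>D)" unfolding piw_def
    by (rule integral_mono) (use int w1 in auto)
  also have "\<dots> = 1" by (simp add: prob_space)
  finally show "piw D m j \<le> 1" .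
qed

lemma SCDL_ge:
  assumes "is_pred_dist D" "k \<le> m"
  shows "(\<Sum>j\<in>{0..k}. piw D m j * max (qw D m j - (real k + 1) / real m) 0) \<le> SCDL m D"
proof -
  have "(\<Sum>j\<in>{0..k}. piw D m j * max (qw D m j - (real k + 1) / real m) 0)
     \<le> (\<Sum>j\<in>{0..k}. piw D m j * max (qw D m j - (real k + 1) / real m) 0)
       + (\<Sum>j\<in>{k+1..m}. piw D m j * max (real k / real m - qw D m j) 0)"
    using piw_bounds[OF assms(1)] by (simp add: sum_nonneg)
  also have "\<dots> \<le> SCDL m D" unfolding SCDL_def
    by (rule Max_ge) (use assms(2) in auto)
  finally show ?thesis .
qed

theorem lemma7p3:
  shows "\<exists>C>0. \<forall>(D :: (real \<times> real) measure) (m :: nat) (i :: nat) (\<alpha> :: real).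
    is_pred_dist D \<longrightarrow> m > 0 \<longrightarrow> i \<le> m \<longrightarrow> \<alpha> > 0 \<longrightarrow>
    (\<Sum>j<i. (if qw D m j > real i / real m - \<alpha> / sqrt (piw D m j)
              then sqrt (piw D m j) else 0))
      \<le> 3 + C * ln (real m) * (\<alpha> * real m + sqrt (real m * SCDL m D))"
proof (intro exI[of _ 6] conjI allI impI)
  fix D :: "(real \<times> real) measure" and m i :: nat and \<alpha> :: real
  assume D: "is_pred_dist D" and m: "m > 0" and i: "i \<le> m" and a: "\<alpha> > 0"
  show "(\<Sum>j<i. (if qw D m j > real i / real m - \<alpha> / sqrt (piw D m j)
              then sqrt (piw D m j) else 0))
      \<le> 3 + 6 * ln (real m) * (\<alpha> * real m + sqrt (real m * SCDL m D))"
  proof -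
    have "sum (ffg (piw D m) (qw D m) m i \<alpha>) {..<i}
      \<le> 3 + 6 * ln (real m) * (\<alpha> * real m + sqrt (real m * SCDL m D))"
      by (rule main_bound) (use piw_bounds[OF D] m i a SCDL_ge[OF D] in auto)
    then show ?thesis unfolding ffg_def by simp
  qed
qed simp

end
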